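(* Let $T\in\mathcal{L}(\mathcal{H})$ be an SD operator. Then for every integer $n\ge1$, $T$ is $n$-EP if and only if $T$ is $n$-normal.
   Context: $\mathcal{H}$ is a Hilbert space, $\mathcal{L}(\mathcal{H})$ the bounded operators on it. For $T$ with closed range, $T^\dagger$ is its Moore–Penrose inverse (unique solution of $TT^\dagger T=T$, $T^\dagger TT^\dagger=T^\dagger$, $(T^\dagger T)^*=T^\dagger T$, $(TT^\dagger)^*=TT^\dagger$). $T$ is SD if it has closed range and $T^*T^\dagger=T^\dagger T^*$. $T$ is $n$-EP if it has closed range and $T^nT^\dagger=T^\dagger T^n$. $T$ is $n$-normal if $T^nT^*=T^*T^n$. *)

theory Defs
  imports "HOL-Analysis.Analysis"
begin

text \<open>Complex Hilbert spaces: a Banach space (over the reals) with a compatible complex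
  scalar multiplication and a complex inner product (linear in the second argument,
  conjugate-linear in the first) inducing the norm.\<close>

class chilbert = banach +
  fixes scaleC :: "complex \<Rightarrow> 'a \<Rightarrow> 'a"
    and cinner :: "'a \<Rightarrow> 'a \<Rightarrow> complex"
  assumes scaleC_add_right: "scaleC c (x + y) = scaleC c x + scaleC c y"
    and scaleC_add_left: "scaleC (c + d) x = scaleC c x + scaleC d x"
    and scaleC_scaleC: "scaleC c (scaleC d x) = scaleC (c * d) x"
    and scaleC_one: "scaleC 1 x = x"
    and scaleC_of_real: "scaleC (complex_of_real r) x = scaleR r x"
    and cinner_commute: "cinner x y = cnj (cinner y x)"
    and cinner_add_right: "cinner x (y + z) = cinner x y + cinner x z"
    and cinner_scaleC_right: "cinner x (scaleC c y) = c * cinner x y"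
    and cinner_self_nonneg: "0 \<le> Re (cinner x x)"
    and norm_cinner: "norm x = sqrt (Re (cinner x x))"

definition bounded_clin :: "('a::chilbert \<Rightarrow> 'a) \<Rightarrow> bool" where
  "bounded_clin T \<longleftrightarrow> bounded_linear T \<and> (\<forall>c x. T (scaleC c x) = scaleC c (T x))"

definition adj :: "('a::chilbert \<Rightarrow> 'a) \<Rightarrow> ('a \<Rightarrow> 'a)" where
  "adj T = (THE S. bounded_clin S \<and> (\<forall>x y. cinner (T x) y = cinner x (S y)))"

text \<open>Moore--Penrose inverse (meaningful for bounded operators with closed range).\<close>
definition mp_inv :: "('a::chilbert \<Rightarrow> 'a) \<Rightarrow> ('a \<Rightarrow> 'a)" where
  "mp_inv T = (THE S. bounded_clin S \<and> T \<circ> S \<circ> T = T \<and> S \<circ> T \<circ> S = S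
      \<and> adj (S \<circ> T) = S \<circ> T \<and> adj (T \<circ> S) = T \<circ> S)"

definition SD :: "('a::chilbert \<Rightarrow> 'a) \<Rightarrow> bool" where
  "SD T \<longleftrightarrow> closed (range T) \<and> adj T \<circ> mp_inv T = mp_inv T \<circ> adj T"

definition n_EP :: "nat \<Rightarrow> ('a::chilbert \<Rightarrow> 'a) \<Rightarrow> bool" where
  "n_EP n T \<longleftrightarrow> closed (range T) \<and> (T ^^ n) \<circ> mp_inv T = mp_inv T \<circ> (T ^^ n)"

definition n_normal :: "nat \<Rightarrow> ('a::chilbert \<Rightarrow> 'a) \<Rightarrow> bool" where
  "n_normal n T \<longleftrightarrow> (T ^^ n) \<circ> adj T = adj T \<circ> (T ^^ n)"

end

theory Submission
  imports Defs "HOL-Analysis.Analysis"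
begin


lemma cinner_add_left: "cinner (x + y) z = cinner x z + cinner y z"
proof -
  have "cinner (x + y) z = cnj (cinner z (x + y))" by (rule cinner_commute)
  also have "\<dots> = cnj (cinner z x) + cnj (cinner z y)" by (simp add: cinner_add_right)
  also have "cnj (cinner z x) = cinner x z" by (rule cinner_commute[symmetric])
  also have "cnj (cinner z y) = cinner y z" by (rule cinner_commute[symmetric])
  finally show ?thesis .
qed

lemma cinner_scaleC_left: "cinner (scaleC c x) y = cnj c * cinner x y"
proof -
  have "cinner (scaleC c x) y = cnj (cinner y (scaleC c x))" by (rule cinner_commute)
  also have "\<dots> = cnj c * cnj (cinner y x)" by (simp add: cinner_scaleC_right)
  also have "cnj (cinner y x) = cinner x y" by (rule cinner_commute[symmetric])
  finally show ?thesis .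
qed

lemma cinner_zero_right [simp]: "cinner x 0 = 0"
  using cinner_add_right[of x 0 0] by simp

lemma cinner_zero_left [simp]: "cinner 0 x = 0"
  using cinner_add_left[of 0 0 x] by simp

lemma cinner_minus_right: "cinner x (- y) = - cinner x y"
proof -
  have "cinner x y + cinner x (-y) = 0" using cinner_add_right[of x y "-y"] by simp
  then show ?thesis by (simp only: add_eq_0_iff)
qed

lemma cinner_minus_left: "cinner (- x) y = - cinner x y"
proof -
  have "cinner x y + cinner (-x) y = 0" using cinner_add_left[of x "-x" y] by simp
  then show ?thesis by (simp only: add_eq_0_iff)
qed

lemma cinner_diff_right: "cinner x (y - z) = cinner x y - cinner x z"
  unfolding diff_conv_add_uminus by (simp only: cinner_add_right cinner_minus_right)

lemma cinner_diff_left: "cinner (x - y) z = cinner x z - cinner y z"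
  unfolding diff_conv_add_uminus by (simp only: cinner_add_left cinner_minus_left)

lemma cinner_scaleR_left: "cinner (scaleR r x) y = of_real r * cinner x y"
  by (simp add: scaleC_of_real[symmetric] cinner_scaleC_left)

lemma cinner_scaleR_right: "cinner x (scaleR r y) = of_real r * cinner x y"
  by (simp add: scaleC_of_real[symmetric] cinner_scaleC_right)

lemma cinner_self_real: "cinner x x = of_real (Re (cinner x x))"
proof -
  have "Im (cinner x x) = Im (cnj (cinner x x))" by (subst cinner_commute, rule refl)
  then have "Im (cinner x x) = - Im (cinner x x)" by simp
  then have "Im (cinner x x) = 0" by simp
  then show ?thesis by (simp add: complex_eq_iff)
qed

lemma Re_cinner_self: "Re (cinner x x) = (norm x)^2"
  by (simp add: norm_cinner cinner_self_nonneg)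

lemma cinner_self_norm: "cinner x x = of_real ((norm x)^2)"
  using cinner_self_real[of x] by (simp only: Re_cinner_self)

lemma cinner_self_eq_0: "cinner x x = 0 \<longleftrightarrow> x = 0"
  by (simp add: cinner_self_norm)

lemma scaleC_zero_left [simp]: "scaleC 0 x = 0"
  using scaleC_of_real[of 0 x] by simp

lemma scaleC_zero_right [simp]: "scaleC c 0 = 0"
  using scaleC_add_right[of c 0 0] by simp

lemma scaleC_minus1: "scaleC (-1) x = - x"
  using scaleC_of_real[of "-1" x] by simp

lemma cinner_ext: "(\<And>x. cinner x u = cinner x v) \<Longrightarrow> u = v"
proof -
  assume "\<And>x. cinner x u = cinner x v"
  then have "cinner (u - v) (u - v) = 0" by (simp add: cinner_diff_right)
  then show "u = v" by (simp add: cinner_self_eq_0)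
qed

lemma norm_scaleC: "norm (scaleC c x) = cmod c * norm x"
proof -
  have "(norm (scaleC c x))^2 = Re (cinner (scaleC c x) (scaleC c x))" by (simp add: Re_cinner_self)
  also have "cinner (scaleC c x) (scaleC c x) = (c * cnj c) * cinner x x"
    by (simp only: cinner_scaleC_left cinner_scaleC_right mult_ac)
  also have "c * cnj c = of_real ((cmod c)^2)" by (rule complex_norm_square[symmetric])
  also have "Re (of_real ((cmod c)^2) * cinner x x) = (cmod c)^2 * (norm x)^2"
    by (simp only: cinner_self_norm of_real_mult[symmetric] Re_complex_of_real)
  finally have "(norm (scaleC c x))^2 = (cmod c * norm x)^2" by (simp add: power_mult_distrib)
  then show ?thesis by (simp add: power2_eq_iff_nonneg)
qed

lemma Re_cinner_commute: "Re (cinner b a) = Re (cinner a b)"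
proof -
  have "Re (cinner b a) = Re (cnj (cinner a b))" by (subst cinner_commute, rule refl)
  then show ?thesis by simp
qed

lemma Re_cs: "Re (cinner a b) \<le> norm a * norm b"
proof -
  define u where "u = scaleR (norm b) a - scaleR (norm a) b"
  have "0 \<le> Re (cinner u u)" by (rule cinner_self_nonneg)
  also have "Re (cinner u u) = 2 * (norm a)^2 * (norm b)^2 - 2 * norm a * norm b * Re (cinner a b)"
  proof -
    have "cinner u u = of_real (norm b * norm b) * cinner a a - of_real (norm b * norm a) * cinner a b
       - of_real (norm a * norm b) * cinner b a + of_real (norm a * norm a) * cinner b b"
      by (simp add: u_def cinner_diff_left cinner_diff_right cinner_scaleR_left cinner_scaleR_right algebra_simps)
    then have "Re (cinner u u) = Re (of_real (norm b * norm b) * cinner a a - of_real (norm b * norm a) * cinner a b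
       - of_real (norm a * norm b) * cinner b a + of_real (norm a * norm a) * cinner b b)" by simp
    also have "\<dots> = 2 * (norm a)^2 * (norm b)^2 - 2 * norm a * norm b * Re (cinner a b)"
      by (simp add: Re_cinner_self[of a] Re_cinner_self[of b] Re_cinner_commute[of a b] power2_eq_square algebra_simps)
    finally show ?thesis .
  qed
  finally have "norm a * norm b * Re (cinner a b) \<le> norm a * norm b * (norm a * norm b)"
    by (simp add: power2_eq_square algebra_simps)
  then show ?thesis
    by (cases "norm a * norm b = 0") (auto simp: mult_le_cancel_left)
qed

lemma cs: "cmod (cinner a b) \<le> norm a * norm b"
proof (cases "cinner a b = 0")
  case True then show ?thesis by simp
next
  case False
  define c where "c = cinner a b"
  define l where "l = c / of_real (cmod c)"
  have l1: "cmod l = 1" using False by (simp add: l_def c_def norm_divide)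
  have "cinner (scaleC l a) b = cnj l * c" by (simp add: cinner_scaleC_left c_def)
  also have "cnj l * c = (c * cnj c) / of_real (cmod c)"
    by (simp add: l_def mult.commute)
  also have "\<dots> = of_real (cmod c)"
    using False by (simp add: complex_norm_square[symmetric] c_def power2_eq_square)
  finally have "cmod c = Re (cinner (scaleC l a) b)" by simp
  also have "\<dots> \<le> norm (scaleC l a) * norm b" by (rule Re_cs)
  finally show ?thesis by (simp add: norm_scaleC l1 c_def)
qed



definition csub :: "'a::chilbert set \<Rightarrow> bool" where
  "csub M \<longleftrightarrow> 0 \<in> M \<and> (\<forall>x\<in>M. \<forall>y\<in>M. x + y \<in> M) \<and> (\<forall>c. \<forall>x\<in>M. scaleC c x \<in> M)"

lemma parallelogram: fixes a b :: "'a::chilbert" shows "(norm (a + b))^2 + (norm (a - b))^2 = 2 * (norm a)^2 + 2 * (norm b)^2"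
proof -
  have "cinner (a + b) (a + b) + cinner (a - b) (a - b) = 2 * cinner a a + 2 * cinner b b"
    by (simp add: cinner_add_left cinner_add_right cinner_diff_left cinner_diff_right algebra_simps)
  then have "Re (cinner (a + b) (a + b) + cinner (a - b) (a - b)) = Re (2 * cinner a a + 2 * cinner b b)"
    by simp
  then show ?thesis by (simp add: Re_cinner_self)
qed

lemma norm_diff_scaleR_sq: fixes w k :: "'a::chilbert" shows
  "(norm (w - scaleR t k))^2 = (norm w)^2 - 2 * t * Re (cinner k w) + t^2 * (norm k)^2"
proof -
  have "cinner (w - scaleR t k) (w - scaleR t k) = cinner w w - of_real t * cinner w k - of_real t * cinner k w
     + of_real t * of_real t * cinner k k"
    by (simp add: cinner_diff_left cinner_diff_right cinner_scaleR_left cinner_scaleR_right algebra_simps)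
  then have "Re (cinner (w - scaleR t k) (w - scaleR t k)) = Re (cinner w w - of_real t * cinner w k - of_real t * cinner k w
     + of_real t * of_real t * cinner k k)" by simp
  also have "\<dots> = (norm w)^2 - 2 * t * Re (cinner k w) + t^2 * (norm k)^2"
    by (simp add: Re_cinner_self[of w] Re_cinner_self[of k] Re_cinner_commute[of k w] power2_eq_square)
  finally show ?thesis by (simp add: Re_cinner_self)
qed

lemma real_var: fixes r s :: real
  assumes "\<And>t. 2 * t * r \<le> t^2 * s" "0 \<le> s" shows "r = 0"
proof -
  define t where "t = r / (s + 1)"
  have rt: "r = t * (s + 1)" using \<open>0 \<le> s\<close> by (simp add: t_def)
  have "2 * t * r \<le> t^2 * s" by (rule assms(1))
  then have "t^2 * (s + 2) \<le> 0" by (simp add: rt power2_eq_square algebra_simps)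
  moreover have "0 \<le> t^2 * (s+2)" using \<open>0 \<le> s\<close> by simp
  ultimately have "t^2 * (s + 2) = 0" by linarith
  then have "t = 0" using \<open>0 \<le> s\<close> by simp
  then show ?thesis by (simp add: rt)
qed

lemma proj_exists:
  fixes M :: "'a::chilbert set"
  assumes cl: "closed M" and sub: "csub M"
  shows "\<exists>m\<in>M. \<forall>k\<in>M. cinner k (z - m) = 0"
proof -
  have M0: "0 \<in> M" and Madd: "\<And>x y. x \<in> M \<Longrightarrow> y \<in> M \<Longrightarrow> x + y \<in> M"
    and MC: "\<And>c x. x \<in> M \<Longrightarrow> scaleC c x \<in> M" using sub by (auto simp: csub_def)
  have MR: "\<And>r x. x \<in> M \<Longrightarrow> scaleR r x \<in> M" using MC by (metis scaleC_of_real)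
  define D where "D = (\<lambda>k. norm (z - k)) ` M"
  define d where "d = Inf D"
  have Dne: "D \<noteq> {}" using M0 by (auto simp: D_def)
  have Dbdd: "bdd_below D" unfolding D_def by (rule bdd_belowI[of _ 0]) auto
  have dle: "\<And>k. k \<in> M \<Longrightarrow> d \<le> norm (z - k)"
    unfolding d_def D_def by (rule cInf_lower) (use Dbdd D_def in auto)
  have d0: "0 \<le> d" unfolding d_def by (rule cInf_greatest[OF Dne]) (auto simp: D_def)
  have "\<forall>n. \<exists>k. k \<in> M \<and> norm (z - k) < d + inverse (real (Suc n))"
  proof
    fix n
    have "Inf D < d + inverse (real (Suc n))" by (simp add: d_def)
    then obtain x where "x \<in> D" "x < d + inverse (real (Suc n))"
      using cInf_less_iff[OF Dne Dbdd] by blast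
    then show "\<exists>k. k \<in> M \<and> norm (z - k) < d + inverse (real (Suc n))" by (auto simp: D_def)
  qed
  then obtain ks where ksM: "\<And>n. ks n \<in> M" and ksd: "\<And>n. norm (z - ks n) < d + inverse (real (Suc n))"
    by metis
  define e where "e n = (2 * d + 1) * inverse (real (Suc n))" for n
  have e0: "0 \<le> e n" for n using d0 by (simp add: e_def)
  have sq: "(norm (z - ks n))^2 \<le> d^2 + e n" for n
  proof -
    define i where "i = inverse (real (Suc n))"
    have i0: "0 < i" "i \<le> 1" by (auto simp: i_def inverse_le_1_iff)
    have "(norm (z - ks n))^2 \<le> (d + i)^2"
      using ksd[of n] by (intro power_mono) (auto simp: i_def)
    moreover have "(d + i)^2 = d^2 + 2 * d * i + i * i" by (simp add: power2_eq_square algebra_simps)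
    moreover have "i * i \<le> 1 * i" using i0 by (intro mult_right_mono) auto
    moreover have "e n = 2 * d * i + i" by (simp add: e_def i_def algebra_simps)
    ultimately show ?thesis by simp
  qed
  have cauchy_est: "(norm (ks m - ks n))^2 \<le> 2 * e n + 2 * e m" for m n
  proof -
    define a where "a = z - ks n"
    define b where "b = z - ks m"
    have "scaleR (1/2) (ks n + ks m) \<in> M" using ksM Madd MR by blast
    then have "d \<le> norm (z - scaleR (1/2) (ks n + ks m))" by (rule dle)
    moreover have "a + b = scaleR 2 (z - scaleR (1/2) (ks n + ks m))"
      by (simp add: a_def b_def algebra_simps scaleR_2)
    ultimately have "2 * d \<le> norm (a + b)" by simp
    then have "(2 * d)^2 \<le> (norm (a + b))^2"
      using d0 by (intro power_mono) auto
    then have "4 * d^2 \<le> (norm (a + b))^2" by (simp add: power_mult_distrib)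
    moreover have "a - b = ks m - ks n" by (simp add: a_def b_def)
    moreover note parallelogram[of a b] sq[of n] sq[of m]
    ultimately show ?thesis by (simp add: a_def b_def)
  qed
  have "Cauchy ks"
  proof (rule metric_CauchyI)
    fix eps0 :: real assume "0 < eps0"
    define eps where "eps = eps0 / 2"
    have "0 < eps" using \<open>0 < eps0\<close> by (simp add: eps_def)
    obtain N where N: "4 * (2 * d + 1) / eps^2 < real N" using reals_Archimedean2 by blast
    have eN: "e n \<le> eps^2 / 4" if "n \<ge> N" for n
    proof -
      have "4 * (2 * d + 1) < real N * eps^2" using N \<open>0 < eps\<close> by (simp add: divide_less_eq mult.commute)
      also have "\<dots> \<le> real (Suc n) * eps^2" using that by (intro mult_right_mono) auto
      finally have "4 * (2 * d + 1) \<le> real (Suc n) * eps^2" by simp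
      then show ?thesis by (simp add: e_def field_simps)
    qed
    show "\<exists>M. \<forall>m\<ge>M. \<forall>n\<ge>M. dist (ks m) (ks n) < eps0"
    proof (intro exI allI impI)
      fix m n assume "m \<ge> N" "n \<ge> N"
      then have "(norm (ks m - ks n))^2 \<le> eps^2"
        using cauchy_est[of m n] eN[of m] eN[of n] by linarith
      then have "norm (ks m - ks n) \<le> eps"
        by (rule power2_le_imp_le) (use \<open>0 < eps\<close> in linarith)
      moreover have "dist (ks m) (ks n) = norm (ks m - ks n)" by (rule dist_norm)
      ultimately show "dist (ks m) (ks n) < eps0"
        using \<open>0 < eps0\<close> eps_def by linarith
    qed
  qed
  then obtain L where L: "ks \<longlonglongrightarrow> L" using Cauchy_convergent_iff convergent_def by blast
  have LM: "L \<in> M" using closed_sequentially[OF cl] ksM L by blast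
  have "norm (z - L) \<le> d"
  proof (rule LIMSEQ_le)
    show "(\<lambda>n. norm (z - ks n)) \<longlonglongrightarrow> norm (z - L)" by (intro tendsto_intros L)
    show "(\<lambda>n. d + inverse (real (Suc n))) \<longlonglongrightarrow> d"
      using tendsto_add[OF tendsto_const LIMSEQ_inverse_real_of_nat, of d] by simp
    show "\<exists>N. \<forall>n\<ge>N. norm (z - ks n) \<le> d + inverse (real (Suc n))"
      using ksd less_imp_le by blast
  qed
  then have dL: "norm (z - L) = d" using dle[OF LM] by linarith
  define w where "w = z - L"
  have "cinner k w = 0" if kM: "k \<in> M" for k
  proof -
    have Re0: "Re (cinner k' w) = 0" if "k' \<in> M" for k'
    proof (rule real_var)
      show "0 \<le> (norm k')^2" by simp
      fix t :: real
      have "L + scaleR t k' \<in> M" using Madd MR LM that by blast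
      then have "d \<le> norm (z - (L + scaleR t k'))" by (rule dle)
      then have "(norm w)^2 \<le> (norm (w - scaleR t k'))^2"
        using dL d0 by (simp add: w_def algebra_simps power_mono)
      then show "2 * t * Re (cinner k' w) \<le> t^2 * (norm k')^2"
        by (simp add: norm_diff_scaleR_sq)
    qed
    have "Re (cinner k w) = 0" using Re0 kM .
    moreover have "Re (cinner (scaleC \<i> k) w) = 0" using Re0 MC kM by blast
    then have "Im (cinner k w) = 0" by (simp add: cinner_scaleC_left)
    ultimately show ?thesis by (simp add: complex_eq_iff)
  qed
  then show ?thesis using LM by (auto simp: w_def)
qed



lemma cinner_bl: "bounded_linear (cinner (y::'a::chilbert))"
proof (rule bounded_linear_intro[where K="norm y"])
  show "cinner y (a + b) = cinner y a + cinner y b" for a b by (rule cinner_add_right)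
  show "cinner y (scaleR r a) = scaleR r (cinner y a)" for r a
    by (simp add: cinner_scaleR_right scaleR_conv_of_real)
  show "norm (cinner y a) \<le> norm a * norm y" for a
    using cs[of y a] by (simp add: mult.commute)
qed

lemma bounded_clinI:
  fixes S :: "'a::chilbert \<Rightarrow> 'a"
  assumes "\<And>x y. S (x + y) = S x + S y" "\<And>c x. S (scaleC c x) = scaleC c (S x)"
    "\<And>x. norm (S x) \<le> norm x * K"
  shows "bounded_clin S"
proof -
  have "bounded_linear S"
  proof (rule bounded_linear_intro[where K=K])
    show "S (x + y) = S x + S y" for x y by (rule assms(1))
    show "S (scaleR r x) = scaleR r (S x)" for r x
      using assms(2)[of "of_real r" x] by (simp only: scaleC_of_real)
    show "norm (S x) \<le> norm x * K" for x by (rule assms(3))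
  qed
  then show ?thesis using assms(2) by (simp add: bounded_clin_def)
qed

lemma bounded_clin_comp: "bounded_clin A \<Longrightarrow> bounded_clin B \<Longrightarrow> bounded_clin (A \<circ> B)"
proof -
  assume A: "bounded_clin A" and B: "bounded_clin B"
  have "bounded_linear (\<lambda>x. A (B x))"
    using A B unfolding bounded_clin_def by (intro bounded_linear_compose[of A B]) simp_all
  then show ?thesis using A B unfolding bounded_clin_def comp_def by simp
qed

lemma bounded_clin_bl: "bounded_clin A \<Longrightarrow> bounded_linear A"
  by (simp add: bounded_clin_def)

lemma bounded_clin_scaleC: "bounded_clin A \<Longrightarrow> A (scaleC c x) = scaleC c (A x)"
  by (simp add: bounded_clin_def)

lemma riesz:
  fixes f :: "'a::chilbert \<Rightarrow> complex"
  assumes bl: "bounded_linear f" and hom: "\<And>c x. f (scaleC c x) = c * f x"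
  shows "\<exists>w. \<forall>x. f x = cinner w x"
proof (cases "\<forall>x. f x = 0")
  case True
  then show ?thesis by (intro exI[of _ 0]) simp
next
  case False
  then obtain z where fz: "f z \<noteq> 0" by blast
  interpret f: bounded_linear f by (rule bl)
  define K where "K = {x. f x = 0}"
  have clK: "closed K" unfolding K_def
    by (rule closed_Collect_eq) (simp_all add: linear_continuous_on bl)
  have subK: "csub K"
    unfolding csub_def K_def by (auto simp: f.add hom)
  obtain m where mK: "m \<in> K" and perp: "\<And>k. k \<in> K \<Longrightarrow> cinner k (z - m) = 0"
    using proj_exists[OF clK subK, of z] by blast
  define w where "w = z - m"
  have fw: "f w = f z" using mK by (simp add: w_def f.diff K_def)
  have w0: "cinner w w \<noteq> 0"
  proof
    assume "cinner w w = 0"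
    then have "w = 0" by (simp add: cinner_self_eq_0)
    then show False using fw fz by simp
  qed
  have key: "f x = cinner (scaleC (cnj (f w / cinner w w)) w) x" for x
  proof -
    define u where "u = x - scaleC (f x / f w) w"
    have "f u = f x - (f x / f w) * f w" by (simp add: u_def f.diff hom)
    also have "\<dots> = 0" using fw fz by simp
    finally have "u \<in> K" by (simp add: K_def)
    then have "cinner u w = 0" using perp by (simp add: w_def)
    moreover have "cinner w u = cnj (cinner u w)" by (rule cinner_commute)
    ultimately have "cinner w u = 0" by simp
    then have "cinner w x = (f x / f w) * cinner w w"
      by (simp add: u_def cinner_diff_right cinner_scaleC_right)
    then have "f x = f w * cinner w x / cinner w w"
      using w0 fw fz by (simp add: field_simps)
    then show ?thesis by (simp add: cinner_scaleC_left)
  qed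
  then show ?thesis by blast
qed

definition is_adj :: "('a::chilbert \<Rightarrow> 'a) \<Rightarrow> ('a \<Rightarrow> 'a) \<Rightarrow> bool" where
  "is_adj T S \<longleftrightarrow> (\<forall>x y. cinner (T x) y = cinner x (S y))"

lemma is_adj_unique: "is_adj T S1 \<Longrightarrow> is_adj T S2 \<Longrightarrow> S1 = S2"
proof
  fix y assume "is_adj T S1" "is_adj T S2"
  then have "cinner x (S1 y) = cinner x (S2 y)" for x unfolding is_adj_def by metis
  then show "S1 y = S2 y" by (rule cinner_ext)
qed

lemma adj_exists:
  fixes T :: "'a::chilbert \<Rightarrow> 'a"
  assumes T: "bounded_clin T"
  shows "\<exists>S. bounded_clin S \<and> is_adj T S"
proof -
  interpret T: bounded_linear T using T by (simp add: bounded_clin_def)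
  have "\<forall>y. \<exists>w. \<forall>x. cinner y (T x) = cinner w x"
  proof
    fix y
    show "\<exists>w. \<forall>x. cinner y (T x) = cinner w x"
    proof (rule riesz)
      show "bounded_linear (\<lambda>x. cinner y (T x))"
        using bounded_linear_compose[OF cinner_bl T.bounded_linear_axioms] by simp
      show "cinner y (T (scaleC c x)) = c * cinner y (T x)" for c x
        using T by (simp add: bounded_clin_scaleC cinner_scaleC_right)
    qed
  qed
  then obtain S where S: "\<And>y x. cinner y (T x) = cinner (S y) x" by metis
  have adjS: "cinner (T x) y = cinner x (S y)" for x y
  proof -
    have "cinner (T x) y = cnj (cinner y (T x))" by (rule cinner_commute)
    also have "\<dots> = cnj (cinner (S y) x)" by (simp only: S)
    also have "\<dots> = cinner x (S y)" by (rule cinner_commute[symmetric])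
    finally show ?thesis .
  qed
  obtain K where K: "K > 0" "\<And>x. norm (T x) \<le> norm x * K" using T.pos_bounded by blast
  have "bounded_clin S"
  proof (rule bounded_clinI[where K=K])
    show "S (a + b) = S a + S b" for a b
      by (rule cinner_ext) (simp add: adjS[symmetric] cinner_add_right)
    show "S (scaleC c a) = scaleC c (S a)" for c a
      by (rule cinner_ext) (simp add: adjS[symmetric] cinner_scaleC_right)
    show "norm (S y) \<le> norm y * K" for y
    proof -
      have "(norm (S y))^2 = Re (cinner (S y) (S y))" by (simp add: Re_cinner_self)
      also have "cinner (S y) (S y) = cinner (T (S y)) y" by (simp add: adjS)
      also have "Re (cinner (T (S y)) y) \<le> norm (T (S y)) * norm y" by (rule Re_cs)
      also have "\<dots> \<le> norm (S y) * K * norm y" using K by (intro mult_right_mono) auto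
      finally have "norm (S y) * norm (S y) \<le> norm (S y) * (norm y * K)"
        by (simp add: power2_eq_square mult_ac)
      then show ?thesis using K(1)
        by (cases "norm (S y) = 0") (auto simp: mult_le_cancel_left)
    qed
  qed
  then show ?thesis using adjS by (auto simp: is_adj_def)
qed

lemma adj_props:
  assumes "bounded_clin T"
  shows "bounded_clin (adj T) \<and> is_adj T (adj T)"
proof -
  have "\<exists>!S. bounded_clin S \<and> (\<forall>x y. cinner (T x) y = cinner x (S y))"
    using adj_exists[OF assms] is_adj_unique unfolding is_adj_def by blast
  then show ?thesis unfolding adj_def is_adj_def by (rule theI')
qed

lemma adj_bc: "bounded_clin T \<Longrightarrow> bounded_clin (adj T)"
  using adj_props by blast

lemma adj_ip: "bounded_clin T \<Longrightarrow> cinner (T x) y = cinner x (adj T y)"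
  using adj_props unfolding is_adj_def by blast

lemma adj_eq: "bounded_clin T \<Longrightarrow> is_adj T S \<Longrightarrow> adj T = S"
  using adj_props is_adj_unique by blast

lemma adj_ip2: "bounded_clin T \<Longrightarrow> cinner (adj T x) y = cinner x (T y)"
proof -
  assume T: "bounded_clin T"
  have "cinner (adj T x) y = cnj (cinner y (adj T x))" by (rule cinner_commute)
  also have "\<dots> = cnj (cinner (T y) x)" by (simp only: adj_ip[OF T])
  also have "\<dots> = cinner x (T y)" by (rule cinner_commute[symmetric])
  finally show ?thesis .
qed

lemma adj_adj: "bounded_clin T \<Longrightarrow> adj (adj T) = T"
  by (rule adj_eq) (auto simp: adj_bc is_adj_def adj_ip2)

lemma adj_comp: "bounded_clin A \<Longrightarrow> bounded_clin B \<Longrightarrow> adj (A \<circ> B) = adj B \<circ> adj A"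
  by (rule adj_eq) (auto simp: bounded_clin_comp is_adj_def adj_ip)



lemma om_baire:
  fixes T :: "'a::real_normed_vector \<Rightarrow> 'b::banach"
  assumes bl: "bounded_linear T" and cl: "closed (range T)"
  shows "\<exists>n::nat. \<exists>y0 r. r > 0 \<and> y0 \<in> range T \<and> (\<forall>y\<in>range T. dist y y0 < r \<longrightarrow> y \<in> closure (T ` cball 0 (real n)))"
proof -
  define Y where "Y = range T"
  define F where "F n = closure (T ` cball 0 (real n))" for n :: nat
  define X where "X = top_of_set Y"
  have clY: "closed Y" using cl by (simp add: Y_def)
  have FY: "F n \<subseteq> Y" for n
  proof -
    have "T ` cball 0 (real n) \<subseteq> Y" by (auto simp: Y_def)
    then show ?thesis unfolding F_def using clY by (rule closure_minimal)
  qed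
  have "closedin euclidean Y" using clY unfolding closed_closedin .
  then have cmX: "completely_metrizable_space X"
    unfolding X_def by (rule completely_metrizable_space_closedin[OF completely_metrizable_space_euclidean])
  have "\<exists>n. X interior_of F n \<noteq> {}"
  proof (rule ccontr)
    assume "\<not> (\<exists>n. X interior_of F n \<noteq> {})"
    then have int0: "\<And>n. X interior_of F n = {}" by blast
    have U0: "X interior_of \<Union>(range F) = {}"
    proof (rule Baire_category_alt)
      show "completely_metrizable_space X \<or> locally_compact_space X \<and> regular_space X"
        using cmX by (rule disjI1)
      show "countable (range F)" by (rule countable_image) simp
      fix S assume "S \<in> range F"
      then obtain n where n: "S = F n" by (rule rangeE)
      have "closedin X (Y \<inter> F n)" unfolding X_def
        by (rule closedin_closed_Int) (simp add: F_def)
      moreover have "Y \<inter> F n = F n" using FY[of n] by (rule Int_absorb1)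
      ultimately show "closedin X S \<and> X interior_of S = {}" using n int0[of n] by simp
    qed
    have UY: "\<Union>(range F) = Y"
    proof
      show "\<Union>(range F) \<subseteq> Y" using FY by (rule UN_least)
      show "Y \<subseteq> \<Union>(range F)"
      proof
        fix y assume "y \<in> Y"
        then obtain x where y: "y = T x" unfolding Y_def by (rule rangeE)
        obtain n :: nat where "norm x \<le> real n" using real_arch_simple by blast
        then have "x \<in> cball 0 (real n)" by simp
        then have "y \<in> T ` cball 0 (real n)" unfolding y by (rule imageI)
        then have "y \<in> F n" unfolding F_def using closure_subset by (rule subsetD[rotated])
        then show "y \<in> \<Union>(range F)" by (rule UN_I[rotated]) (rule UNIV_I)
      qed
    qed
    have "X interior_of Y = Y"
      using interior_of_topspace[of X] by (simp add: X_def)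
    with U0 UY have "Y = {}" by simp
    moreover have "T 0 \<in> Y" by (simp add: Y_def)
    ultimately show False by simp
  qed
  then obtain n y0 where y0: "y0 \<in> X interior_of F n" by blast
  have "openin X (X interior_of F n)" by (rule openin_interior_of)
  then have "\<forall>x\<in>X interior_of F n. \<exists>\<epsilon>. 0 < \<epsilon> \<and> ball x \<epsilon> \<inter> Y \<subseteq> X interior_of F n"
    unfolding X_def openin_contains_ball by (rule conjunct2)
  then obtain r where r: "r > 0" "ball y0 r \<inter> Y \<subseteq> X interior_of F n"
    using y0 by blast
  have sub: "X interior_of F n \<subseteq> F n" by (rule interior_of_subset)
  have "\<forall>y\<in>range T. dist y y0 < r \<longrightarrow> y \<in> F n"
  proof (intro ballI impI)
    fix y assume "y \<in> range T" "dist y y0 < r"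
    then have "y \<in> ball y0 r \<inter> Y" by (simp add: Y_def dist_commute)
    then show "y \<in> F n" using r(2) sub by blast
  qed
  moreover have "y0 \<in> range T" using y0 sub FY[of n] unfolding Y_def by blast
  ultimately show ?thesis using r(1) unfolding F_def by blast
qed

lemma om_approx:
  fixes T :: "'a::real_normed_vector \<Rightarrow> 'b::banach"
  assumes bl: "bounded_linear T" and cl: "closed (range T)"
  shows "\<exists>K>0. \<forall>y\<in>range T. \<forall>e>0. \<exists>x. norm x \<le> K * norm y \<and> norm (T x - y) < e"
proof -
  interpret T: bounded_linear T by (rule bl)
  obtain n :: nat and y0 r where r: "r > 0" and y0R: "y0 \<in> range T"
    and B: "\<And>y. y \<in> range T \<Longrightarrow> dist y y0 < r \<Longrightarrow> y \<in> closure (T ` cball 0 (real n))"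
    using om_baire[OF bl cl] by blast
  have small: "\<exists>x. norm x \<le> 2 * real n \<and> norm (T x - y) < e"
    if yR: "y \<in> range T" and ny: "norm y < r" and e: "e > 0" for y e
  proof -
    have "y0 + y \<in> range T" using y0R yR by (auto simp: T.add[symmetric])
    moreover have "dist (y0 + y) y0 < r" using ny by (simp add: dist_norm)
    ultimately have "y0 + y \<in> closure (T ` cball 0 (real n))" by (rule B)
    then have "\<forall>\<epsilon>>0. \<exists>z\<in>T ` cball 0 (real n). dist z (y0 + y) < \<epsilon>"
      by (simp only: closure_approachable)
    then have "\<exists>z\<in>T ` cball 0 (real n). dist z (y0 + y) < e / 2" using e by (meson half_gt_zero)
    then obtain x1 where x1: "x1 \<in> cball 0 (real n)" "dist (T x1) (y0 + y) < e / 2"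
      by blast
    have "y0 \<in> closure (T ` cball 0 (real n))" using B[OF y0R] r by simp
    then have "\<forall>\<epsilon>>0. \<exists>z\<in>T ` cball 0 (real n). dist z y0 < \<epsilon>"
      by (simp only: closure_approachable)
    then have "\<exists>z\<in>T ` cball 0 (real n). dist z y0 < e / 2" using e by (meson half_gt_zero)
    then obtain x2 where x2: "x2 \<in> cball 0 (real n)" "dist (T x2) y0 < e / 2"
      by blast
    have eq: "T (x1 - x2) - y = (T x1 - (y0 + y)) - (T x2 - y0)" by (simp add: T.diff algebra_simps)
    have "norm (T (x1 - x2) - y) \<le> norm (T x1 - (y0 + y)) + norm (T x2 - y0)"
      unfolding eq by (rule norm_triangle_ineq4)
    also have "\<dots> < e" using x1(2) x2(2) by (simp add: dist_norm)
    finally have "norm (T (x1 - x2) - y) < e" .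
    moreover have "norm (x1 - x2) \<le> 2 * real n"
      using x1(1) x2(1) norm_triangle_ineq4[of x1 x2] by simp
    ultimately show ?thesis by blast
  qed
  define K where "K = 4 * real n / r + 1"
  have "0 \<le> 4 * real n / r" using r by simp
  then have K0: "K > 0" by (simp add: K_def)
  have "\<exists>x. norm x \<le> K * norm y \<and> norm (T x - y) < e"
    if yR: "y \<in> range T" and e: "e > 0" for y e
  proof (cases "y = 0")
    case True
    then show ?thesis using e by (intro exI[of _ 0]) simp
  next
    case False
    then have ny: "norm y > 0" by simp
    define s where "s = r / (2 * norm y)"
    have s0: "s > 0" using r ny by (simp add: s_def)
    have "scaleR s y \<in> range T" using yR by (auto simp: T.scaleR[symmetric])
    moreover have "norm (scaleR s y) < r" using r ny s0 by (simp add: s_def)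
    moreover have "e * s > 0" using e s0 by simp
    ultimately obtain x' where x': "norm x' \<le> 2 * real n" "norm (T x' - scaleR s y) < e * s"
      using small by blast
    define x where "x = scaleR (1 / s) x'"
    have "T x - y = scaleR (1 / s) (T x' - scaleR s y)"
      using s0 by (simp add: x_def T.scaleR scaleR_diff_right)
    then have "norm (T x - y) = norm (T x' - scaleR s y) / s" using s0 by simp
    also have "\<dots> < e" using x'(2) s0 by (simp add: divide_less_eq)
    finally have 1: "norm (T x - y) < e" .
    have "norm x = norm x' / s" using s0 by (simp add: x_def)
    also have "\<dots> \<le> 2 * real n / s" using x'(1) s0 by (simp add: divide_right_mono)
    also have "2 * real n / s = 4 * real n / r * norm y" using r ny by (simp add: s_def field_simps)
    also have "\<dots> \<le> K * norm y" using ny by (intro mult_right_mono) (auto simp: K_def)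
    finally show ?thesis using 1 by blast
  qed
  then show ?thesis using K0 by blast
qed

lemma open_mapping_closed_range:
  fixes T :: "'a::banach \<Rightarrow> 'b::banach"
  assumes bl: "bounded_linear T" and cl: "closed (range T)"
  shows "\<exists>C>0. \<forall>y\<in>range T. \<exists>x. T x = y \<and> norm x \<le> C * norm y"
proof -
  interpret T: bounded_linear T by (rule bl)
  obtain K where K0: "K > 0" and A: "\<And>y e. y \<in> range T \<Longrightarrow> e > 0 \<Longrightarrow> \<exists>x. norm x \<le> K * norm y \<and> norm (T x - y) < e"
    using om_approx[OF bl cl] by blast
  define g where "g y e = (SOME x. norm x \<le> K * norm y \<and> norm (T x - y) < e)" for y e
  have g: "norm (g y e) \<le> K * norm y \<and> norm (T (g y e) - y) < e" if "y \<in> range T" "e > 0" for y e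
    unfolding g_def by (rule someI_ex) (rule A[OF that])
  have "\<exists>x. T x = y \<and> norm x \<le> (2 * K) * norm y" if yR: "y \<in> range T" for y
  proof (cases "y = 0")
    case True then show ?thesis by (intro exI[of _ 0]) simp
  next
    case False
    then have ny: "norm y > 0" by simp
    define ep where "ep k = norm y * (1/2)^(Suc k)" for k :: nat
    have ep0: "ep k > 0" for k using ny by (simp add: ep_def)
    define ys where "ys = rec_nat y (\<lambda>k z. z - T (g z (ep k)))"
    have ys0: "ys 0 = y" by (simp add: ys_def)
    have ysS: "ys (Suc k) = ys k - T (g (ys k) (ep k))" for k by (simp add: ys_def)
    define xs where "xs k = g (ys k) (ep k)" for k
    have inv: "ys k \<in> range T \<and> norm (ys k) \<le> norm y * (1/2)^k" for k
    proof (induction k)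
      case 0 then show ?case using yR by (simp add: ys0)
    next
      case (Suc k)
      then have R: "ys k \<in> range T" by blast
      have "ys (Suc k) = T (inv T (ys k) - g (ys k) (ep k))"
        using R by (simp add: ysS T.diff f_inv_into_f)
      moreover have "norm (ys (Suc k)) < ep k"
        using g[OF R ep0[of k]] by (simp add: ysS norm_minus_commute)
      ultimately show ?case by (simp add: ep_def less_imp_le)
    qed
    have xsb: "norm (xs k) \<le> K * norm y * (1/2)^k" for k
    proof -
      have "norm (xs k) \<le> K * norm (ys k)" using g[of "ys k" "ep k"] inv[of k] ep0[of k] by (simp add: xs_def)
      also have "\<dots> \<le> K * (norm y * (1/2)^k)" using inv[of k] K0 by (intro mult_left_mono) auto
      finally show ?thesis by (simp add: mult_ac)
    qed
    have sg: "summable (\<lambda>k. K * norm y * (1/2::real)^k)"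
      by (intro summable_mult summable_geometric) simp
    have sn: "summable (\<lambda>k. norm (xs k))"
      by (rule summable_comparison_test[OF _ sg]) (use xsb in auto)
    have sx: "summable xs" by (rule summable_norm_cancel[OF sn])
    define x where "x = suminf xs"
    have Tx: "T x = (\<Sum>k. T (xs k))" unfolding x_def by (rule T.suminf[OF sx])
    have ps: "(\<Sum>k<N. T (xs k)) = y - ys N" for N
    proof -
      have "(\<Sum>k<N. T (xs k)) = (\<Sum>k<N. ys k - ys (Suc k))" by (simp add: ysS xs_def)
      also have "\<dots> = ys 0 - ys N" by (rule sum_lessThan_telescope')
      finally show ?thesis by (simp add: ys0)
    qed
    have "ys \<longlonglongrightarrow> 0"
    proof (rule tendsto_norm_zero_cancel, rule Lim_null_comparison)
      show "\<forall>\<^sub>F k in sequentially. norm (norm (ys k)) \<le> norm y * (1/2)^k" using inv by simp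
      show "(\<lambda>k. norm y * (1/2::real)^k) \<longlonglongrightarrow> 0"
        using tendsto_mult[OF tendsto_const LIMSEQ_power_zero[of "1/2::real"], of "norm y"] by simp
    qed
    then have "(\<lambda>N. y - ys N) \<longlonglongrightarrow> y - 0" by (intro tendsto_intros)
    then have "(\<lambda>k. T (xs k)) sums y" unfolding sums_def using ps by simp
    then have "y = (\<Sum>k. T (xs k))" by (rule sums_unique)
    then have "T x = y" using Tx by simp
    moreover have "norm x \<le> 2 * K * norm y"
    proof -
      have "norm x \<le> (\<Sum>k. norm (xs k))" unfolding x_def by (rule summable_norm[OF sn])
      also have "\<dots> \<le> (\<Sum>k. K * norm y * (1/2::real)^k)" by (rule suminf_le[OF xsb sn sg])
      also have "\<dots> = K * norm y * (\<Sum>k. (1/2::real)^k)" by (rule suminf_mult) simp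
      also have "(\<Sum>k. (1/2::real)^k) = 2" using suminf_geometric[of "1/2::real"] by simp
      finally show ?thesis by (simp add: mult_ac)
    qed
    ultimately show ?thesis by blast
  qed
  then show ?thesis using K0 by (intro exI[of _ "2 * K"]) auto
qed



lemma pythag:
  fixes a b :: "'a::chilbert"
  assumes "cinner a b = 0"
  shows "norm a \<le> norm (a + b)" "norm b \<le> norm (a + b)"
proof -
  have ba: "cinner b a = 0"
  proof -
    have "cinner b a = cnj (cinner a b)" by (rule cinner_commute)
    then show ?thesis using assms by simp
  qed
  have "cinner (a + b) (a + b) = cinner a a + cinner b b"
    using assms ba by (simp add: cinner_add_left cinner_add_right)
  then have "Re (cinner (a + b) (a + b)) = Re (cinner a a) + Re (cinner b b)" by simp
  then have eq: "(norm (a + b))^2 = (norm a)^2 + (norm b)^2" by (simp only: Re_cinner_self)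
  show "norm a \<le> norm (a + b)"
    by (rule power2_le_imp_le) (use eq in simp_all)
  show "norm b \<le> norm (a + b)"
    by (rule power2_le_imp_le) (use eq in simp_all)
qed

lemma scaleC_minus_right: "scaleC c (- x) = - scaleC c (x::'a::chilbert)"
proof -
  have "scaleC c x + scaleC c (- x) = 0" by (simp only: scaleC_add_right[symmetric] add.right_inverse scaleC_zero_right)
  then show ?thesis by (simp only: add_eq_0_iff)
qed

lemma scaleC_diff_right: "scaleC c (x - y) = scaleC c x - scaleC c (y::'a::chilbert)"
  by (simp only: diff_conv_add_uminus scaleC_add_right scaleC_minus_right)

lemma perp_sym: "cinner a b = 0 \<Longrightarrow> cinner b a = (0::complex)"
proof -
  assume "cinner a b = 0"
  moreover have "cinner b a = cnj (cinner a b)" by (rule cinner_commute)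
  ultimately show ?thesis by simp
qed

locale mpsetup =
  fixes T :: "'a::chilbert \<Rightarrow> 'a"
  assumes T: "bounded_clin T" and clR: "closed (range T)"
begin

definition N where "N = {x. T x = 0}"
definition Q where "Q y x \<longleftrightarrow> (\<forall>k\<in>N. cinner k x = 0) \<and> (\<forall>r\<in>range T. cinner r (y - T x) = 0)"

lemma Tbl: "bounded_linear T" using T by (rule bounded_clin_bl)

lemma Tadd: "T (a + b) = T a + T b" using Tbl by (rule linear_simps)
lemma Tdiff: "T (a - b) = T a - T b" using Tbl by (rule linear_simps)
lemma T0: "T 0 = 0" using Tbl by (rule linear_simps)
lemma TC: "T (scaleC c a) = scaleC c (T a)" using T by (rule bounded_clin_scaleC)

lemma clN: "closed N"
  unfolding N_def by (rule closed_Collect_eq) (simp_all add: linear_continuous_on Tbl)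

lemma csubN: "csub N"
  unfolding csub_def N_def by (simp add: Tadd T0 TC)

lemma csubR: "csub (range T)"
  unfolding csub_def
proof (intro conjI ballI allI)
  show "0 \<in> range T" using T0 by (metis rangeI)
  fix x y assume "x \<in> range T" "y \<in> range T"
  then obtain a b where "x = T a" "y = T b" by blast
  then show "x + y \<in> range T" by (simp add: Tadd[symmetric])
next
  fix c x assume "x \<in> range T"
  then obtain a where "x = T a" by blast
  then show "scaleC c x \<in> range T" by (simp add: TC[symmetric])
qed

lemma Q_unique: assumes "Q y x1" "Q y x2" shows "x1 = x2"
proof -
  define d where "d = x1 - x2"
  have "T d = (y - T x2) - (y - T x1)" by (simp add: d_def Tdiff)
  moreover have "cinner (T d) (y - T x2) = 0" "cinner (T d) (y - T x1) = 0"
    using assms unfolding Q_def by blast+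
  ultimately have "cinner (T d) (T d) = 0"
    by (metis cinner_diff_right diff_self)
  then have Td: "T d = 0" by (simp add: cinner_self_eq_0)
  then have "d \<in> N" by (simp add: N_def)
  then have "cinner d x1 = 0" "cinner d x2 = 0" using assms unfolding Q_def by blast+
  then have "cinner d d = 0" by (simp add: d_def cinner_diff_right)
  then show ?thesis by (simp add: cinner_self_eq_0 d_def)
qed

lemma Q_exists: "\<exists>C>0. \<forall>y. \<exists>x. Q y x \<and> norm x \<le> C * norm y"
proof -
  obtain C where C: "C > 0" "\<And>y. y \<in> range T \<Longrightarrow> \<exists>x. T x = y \<and> norm x \<le> C * norm y"
    using open_mapping_closed_range[OF Tbl clR] by blast
  have "\<exists>x. Q y x \<and> norm x \<le> C * norm y" for y
  proof -
    obtain m where mR: "m \<in> range T" and pm: "\<And>r. r \<in> range T \<Longrightarrow> cinner r (y - m) = 0"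
      using proj_exists[OF clR csubR, of y] by blast
    obtain x where x: "T x = m" "norm x \<le> C * norm m" using C(2)[OF mR] by blast
    obtain p where pN: "p \<in> N" and pp: "\<And>k. k \<in> N \<Longrightarrow> cinner k (x - p) = 0"
      using proj_exists[OF clN csubN, of x] by blast
    define x0 where "x0 = x - p"
    have Tx0: "T x0 = m" using pN x(1) by (simp add: x0_def Tdiff N_def)
    have Q: "Q y x0" unfolding Q_def using pp pm Tx0 by (simp add: x0_def)
    have "norm x0 \<le> norm (x0 + p)" using pythag(1)[OF perp_sym[OF pp[OF pN]]] by (simp add: x0_def)
    also have "x0 + p = x" by (simp add: x0_def)
    also note x(2)
    also have "norm m \<le> norm (m + (y - m))" by (rule pythag(1)[OF pm[OF mR]]) 
    then have "C * norm m \<le> C * norm y" using C(1) by simp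
    finally show ?thesis using Q by blast
  qed
  then show ?thesis using C(1) by blast
qed

definition S0 where "S0 y = (SOME x. Q y x)"

lemma S0Q: "Q y (S0 y)"
proof -
  obtain C where "\<forall>y. \<exists>x. Q y x \<and> norm x \<le> C * norm y" using Q_exists by blast
  then have "\<exists>x. Q y x" by blast
  then show ?thesis unfolding S0_def by (rule someI_ex)
qed

lemma S0_eq: "Q y x \<Longrightarrow> S0 y = x"
  using Q_unique S0Q by blast

lemma S0_bc: "bounded_clin S0"
proof -
  obtain C where C: "C > 0" "\<And>y. \<exists>x. Q y x \<and> norm x \<le> C * norm y" using Q_exists by blast
  show ?thesis
  proof (rule bounded_clinI[where K=C])
    fix a b
    show "S0 (a + b) = S0 a + S0 b"
    proof (rule S0_eq)
      have eq: "a + b - T (S0 a + S0 b) = (a - T (S0 a)) + (b - T (S0 b))" by (simp add: Tadd)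
      show "Q (a + b) (S0 a + S0 b)" unfolding Q_def eq
        using S0Q[of a] S0Q[of b] unfolding Q_def by (simp add: cinner_add_right)
    qed
  next
    fix c a
    show "S0 (scaleC c a) = scaleC c (S0 a)"
    proof (rule S0_eq)
      have eq: "scaleC c a - T (scaleC c (S0 a)) = scaleC c (a - T (S0 a))"
        by (simp add: TC scaleC_diff_right)
      show "Q (scaleC c a) (scaleC c (S0 a))" unfolding Q_def eq
        using S0Q[of a] unfolding Q_def by (simp add: cinner_scaleC_right)
    qed
  next
    fix y
    obtain x where "Q y x" "norm x \<le> C * norm y" using C(2) by blast
    then show "norm (S0 y) \<le> norm y * C" using S0_eq by (simp add: mult.commute)
  qed
qed

lemma TS0T: "T (S0 (T x)) = T x"
proof -
  define v where "v = T x - T (S0 (T x))"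
  have "v \<in> range T" by (simp add: v_def Tdiff[symmetric])
  then have "cinner v v = 0" using S0Q[of "T x"] unfolding Q_def v_def by blast
  then have "v = 0" by (simp add: cinner_self_eq_0)
  then show ?thesis by (simp add: v_def)
qed

lemma S0TS0: "S0 (T (S0 y)) = S0 y"
  by (rule S0_eq) (use S0Q[of y] in \<open>simp add: Q_def\<close>)

lemma S0T_sa: "adj (S0 \<circ> T) = S0 \<circ> T"
proof (rule adj_eq)
  show "bounded_clin (S0 \<circ> T)" by (rule bounded_clin_comp[OF S0_bc T])
  show "is_adj (S0 \<circ> T) (S0 \<circ> T)" unfolding is_adj_def
  proof (intro allI)
    fix x y
    define P where "P z = S0 (T z)" for z
    have PN: "cinner k (P z) = 0" if "k \<in> N" for k z using S0Q that unfolding Q_def P_def by blast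
    have IN: "z - P z \<in> N" for z by (simp add: N_def P_def Tdiff TS0T)
    have "cinner (P x) y = cinner (P x) (P y) + cinner (P x) (y - P y)"
      by (simp add: cinner_diff_right)
    also have "cinner (P x) (y - P y) = 0" by (rule perp_sym[OF PN[OF IN]])
    also have "cinner x (P y) = cinner (P x) (P y) + cinner (x - P x) (P y)"
      by (simp add: cinner_diff_left)
    moreover have "cinner (x - P x) (P y) = 0" by (rule PN[OF IN])
    ultimately show "cinner ((S0 \<circ> T) x) y = cinner x ((S0 \<circ> T) y)" by (simp add: P_def)
  qed
qed

lemma TS0_sa: "adj (T \<circ> S0) = T \<circ> S0"
proof (rule adj_eq)
  show "bounded_clin (T \<circ> S0)" by (rule bounded_clin_comp[OF T S0_bc])
  show "is_adj (T \<circ> S0) (T \<circ> S0)" unfolding is_adj_def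
  proof (intro allI)
    fix x y
    define P where "P z = T (S0 z)" for z
    have PR: "P z \<in> range T" for z by (simp add: P_def)
    have IP: "cinner r (z - P z) = 0" if "r \<in> range T" for r z using S0Q that unfolding Q_def P_def by blast
    have "cinner (P x) y = cinner (P x) (P y) + cinner (P x) (y - P y)"
      by (simp add: cinner_diff_right)
    also have "cinner (P x) (y - P y) = 0" by (rule IP[OF PR])
    also have "cinner x (P y) = cinner (P x) (P y) + cinner (x - P x) (P y)"
      by (simp add: cinner_diff_left)
    moreover have "cinner (x - P x) (P y) = 0" by (rule perp_sym[OF IP[OF PR]])
    ultimately show "cinner ((T \<circ> S0) x) y = cinner x ((T \<circ> S0) y)" by (simp add: P_def)
  qed
qed

definition MP where "MP S \<longleftrightarrow> bounded_clin S \<and> T \<circ> S \<circ> T = T \<and> S \<circ> T \<circ> S = S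
      \<and> adj (S \<circ> T) = S \<circ> T \<and> adj (T \<circ> S) = T \<circ> S"

lemma MP_S0: "MP S0"
  unfolding MP_def using S0_bc TS0T S0TS0 S0T_sa TS0_sa by (auto simp: fun_eq_iff)

lemma MP_unique: assumes "MP S" shows "S = S0"
proof
  fix y
  have bS: "bounded_clin S" and TST: "\<And>x. T (S (T x)) = T x" and STS: "\<And>x. S (T (S x)) = S x"
    and A1: "adj (S \<circ> T) = S \<circ> T" and A2: "adj (T \<circ> S) = T \<circ> S"
    using assms unfolding MP_def by (auto simp: fun_eq_iff)
  have bST: "bounded_clin (S \<circ> T)" by (rule bounded_clin_comp[OF bS T])
  have bTS: "bounded_clin (T \<circ> S)" by (rule bounded_clin_comp[OF T bS])
  have ST: "cinner (S (T a)) b = cinner a (S (T b))" for a b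
    using adj_ip[OF bST, of a b] A1 by simp
  have TS: "cinner (T (S a)) b = cinner a (T (S b))" for a b
    using adj_ip[OF bTS, of a b] A2 by simp
  have S0': "S 0 = 0" using bounded_clin_bl[OF bS] by (rule linear_simps)
  show "S y = S0 y"
  proof (rule S0_eq[symmetric])
    show "Q y (S y)" unfolding Q_def
    proof (intro conjI ballI)
      fix k assume "k \<in> N"
      then have Tk: "T k = 0" by (simp add: N_def)
      have "cinner k (S y) = cinner k (S (T (S y)))" by (simp add: STS)
      also have "\<dots> = cinner (S (T k)) (S y)" by (simp add: ST)
      also have "\<dots> = 0" by (simp add: Tk S0')
      finally show "cinner k (S y) = 0" .
    next
      fix r assume "r \<in> range T"
      then obtain a where r: "r = T a" by blast
      have "cinner r (y - T (S y)) = cinner (T (S (T a))) (y - T (S y))" by (simp add: r TST)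
      also have "\<dots> = cinner (T a) (T (S (y - T (S y))))" by (simp add: TS)
      also have "T (S (y - T (S y))) = 0"
        using bounded_clin_bl[OF bS] by (simp add: linear_simps Tdiff TST)
      finally show "cinner r (y - T (S y)) = 0" by simp
    qed
  qed
qed

lemma mp_inv_eq: "mp_inv T = S0"
proof -
  have "\<exists>!S. MP S" using MP_S0 MP_unique by blast
  then have "MP (mp_inv T)" unfolding mp_inv_def MP_def[symmetric] by (rule theI')
  then show ?thesis by (rule MP_unique)
qed

lemma mp_props: "MP (mp_inv T)"
  using MP_S0 mp_inv_eq by simp

end



theorem mainTheorem10:
  fixes T :: "'a::chilbert \<Rightarrow> 'a" and n :: nat
  assumes "bounded_clin T" and "SD T" and "n \<ge> 1"
  shows "n_EP n T \<longleftrightarrow> n_normal n T"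
proof -
  have bca: "bounded_clin T" by fact
  have clR: "closed (range T)" and SDc: "adj T \<circ> mp_inv T = mp_inv T \<circ> adj T"
    using assms(2) by (auto simp: SD_def)
  interpret mpsetup T using bca clR by unfold_locales
  define a where "a = T"
  define m where "m = mp_inv T"
  define s where "s = adj T"
  define t where "t = adj m"
  have MPm: "MP m" using mp_props by (simp add: m_def)
  have bcm: "bounded_clin m" using MPm by (simp add: MP_def)
  have bcs: "bounded_clin s" using bca by (simp add: s_def adj_bc)
  have bct: "bounded_clin t" using bcm by (simp add: t_def adj_bc)
  have P1: "\<And>x. a (m (a x)) = a x" using MPm by (simp add: MP_def fun_eq_iff a_def)
  have P2: "\<And>x. m (a (m x)) = m x" using MPm by (simp add: MP_def fun_eq_iff a_def)
  have P3: "adj (m \<circ> a) = m \<circ> a" using MPm by (simp add: MP_def a_def)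
  have P4: "adj (a \<circ> m) = a \<circ> m" using MPm by (simp add: MP_def a_def)
  have Q1: "\<And>x. s (t x) = m (a x)"
  proof -
    have "adj (m \<circ> a) = adj a \<circ> adj m" using bcm bca by (simp add: adj_comp a_def)
    then have "s \<circ> t = m \<circ> a" using P3 by (simp add: s_def t_def a_def)
    then show "\<And>x. s (t x) = m (a x)" by (simp add: fun_eq_iff)
  qed
  have Q2: "\<And>x. t (s x) = a (m x)"
  proof -
    have "adj (a \<circ> m) = adj m \<circ> adj a" using bcm bca by (simp add: adj_comp a_def)
    then have "t \<circ> s = a \<circ> m" using P4 by (simp add: s_def t_def a_def)
    then show "\<And>x. t (s x) = a (m x)" by (simp add: fun_eq_iff)
  qed
  have SD1: "\<And>x. s (m x) = m (s x)" using SDc by (simp add: fun_eq_iff s_def m_def)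
  have SD2: "\<And>x. t (a x) = a (t x)"
  proof -
    have "adj (s \<circ> m) = adj (m \<circ> s)" using SDc by (simp add: s_def m_def)
    moreover have "adj (s \<circ> m) = t \<circ> a" using bcm bcs bca by (simp add: adj_comp adj_adj s_def t_def a_def)
    moreover have "adj (m \<circ> s) = a \<circ> t" using bcm bcs bca by (simp add: adj_comp adj_adj s_def t_def a_def)
    ultimately show "\<And>x. t (a x) = a (t x)" by (simp add: fun_eq_iff)
  qed
  have ipa: "\<And>y z. cinner y (a z) = cinner (s y) z" using bca by (simp add: adj_ip2 a_def s_def)
  have ips: "\<And>y z. cinner y (s z) = cinner (a y) z" using bca by (simp add: adj_ip a_def s_def)
  have ipm: "\<And>y z. cinner y (m z) = cinner (t y) z" using bcm by (simp add: adj_ip2 t_def)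
  have F1: "\<And>x. m (a (s x)) = s x"
  proof (rule cinner_ext)
    fix x y
    have "cinner y (m (a (s x))) = cinner (a (s (t y))) x" by (simp add: ipa ips ipm)
    also have "a (s (t y)) = a (m (a y))" by (simp add: Q1)
    also have "\<dots> = a y" by (rule P1)
    also have "cinner (a y) x = cinner y (s x)" by (simp add: ips)
    finally show "cinner y (m (a (s x))) = cinner y (s x)" .
  qed
  have F3: "\<And>x. m x = m (t (s x))" using P2 Q2 by simp
  have F4: "\<And>x. m x = s (t (m x))" using P2 Q1 by simp
  have ta_pow: "\<And>x. t ((a ^^ k) x) = (a ^^ k) (t x)" for k
    by (induction k) (simp_all add: SD2)
  have aa_pow: "\<And>x. a ((a ^^ k) x) = (a ^^ k) (a x)" for k
    by (rule funpow_swap1)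
  have EPiff: "n_EP n T \<longleftrightarrow> (\<forall>x. (a ^^ n) (m x) = m ((a ^^ n) x))"
    using clR by (simp add: n_EP_def fun_eq_iff a_def m_def)
  have NRiff: "n_normal n T \<longleftrightarrow> (\<forall>x. (a ^^ n) (s x) = s ((a ^^ n) x))"
    by (simp add: n_normal_def fun_eq_iff a_def s_def)
  have L: "\<And>x. a (s (a (a (m x)))) = a (a (s x))"
  proof (rule cinner_ext)
    fix x y
    have "cinner y (a (s (a (a (m x))))) = cinner (t (s (s (a (s y))))) x" by (simp add: ipa ips ipm)
    also have "t (s (s (a (s y)))) = a (m (s (a (s y))))" by (rule Q2)
    also have "\<dots> = a (s (m (a (s y))))" by (simp add: SD1)
    also have "\<dots> = a (s (s y))" by (simp add: F1)
    also have "cinner (a (s (s y))) x = cinner y (a (a (s x)))" by (simp add: ipa ips)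
    finally show "cinner y (a (s (a (a (m x))))) = cinner y (a (a (s x)))" .
  qed
  have Lk: "\<And>x. a (s ((a ^^ Suc k) (a (m x)))) = (a ^^ Suc k) (a (s x))" for k
  proof (induction k)
    case 0 then show ?case by (simp add: L)
  next
    case (Suc k)
    fix x
    have "(a ^^ Suc (Suc k)) (a (m x)) = (a ^^ Suc k) (a (a (m x)))"
      by (simp only: funpow_Suc_right o_apply)
    also have "a (a (m x)) = a (m (a (a (m x))))" by (simp add: P1)
    finally have "a (s ((a ^^ Suc (Suc k)) (a (m x)))) = a (s ((a ^^ Suc k) (a (m (a (a (m x)))))))" by simp
    also have "\<dots> = (a ^^ Suc k) (a (s (a (a (m x)))))" by (rule Suc.IH)
    also have "a (s (a (a (m x)))) = a (a (s x))" by (rule L)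
    also have "(a ^^ Suc k) (a (a (s x))) = (a ^^ Suc (Suc k)) (a (s x))"
      by (simp only: funpow_Suc_right o_apply)
    finally show "a (s ((a ^^ Suc (Suc k)) (a (m x)))) = (a ^^ Suc (Suc k)) (a (s x))" .
  qed
  show ?thesis
  proof
    assume "n_EP n T"
    then have EP: "\<And>x. (a ^^ n) (m x) = m ((a ^^ n) x)" using EPiff by blast
    obtain k where n: "n = Suc k" using assms(3) by (cases n) auto
    have an: "(a ^^ n) (a (m y)) = (a ^^ n) y" for y
    proof -
      have "(a ^^ n) (a (m y)) = a ((a ^^ n) (m y))" by (simp add: aa_pow)
      also have "\<dots> = a (m ((a ^^ n) y))" by (simp add: EP)
      also have "(a ^^ n) y = a ((a ^^ k) y)" by (simp add: n)
      also have "a (m (a ((a ^^ k) y))) = a ((a ^^ k) y)" by (rule P1)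
      also have "\<dots> = (a ^^ n) y" by (simp add: n)
      finally show ?thesis .
    qed
    have "(a ^^ n) (s x) = s ((a ^^ n) x)" for x
    proof -
      have "s ((a ^^ n) x) = m (a (s ((a ^^ n) x)))" by (simp add: F1)
      also have "a (s ((a ^^ n) x)) = a (s ((a ^^ n) (a (m x))))" by (simp add: an)
      also have "\<dots> = (a ^^ n) (a (s x))" unfolding n by (rule Lk)
      also have "m ((a ^^ n) (a (s x))) = (a ^^ n) (m (a (s x)))" by (simp add: EP)
      also have "m (a (s x)) = s x" by (rule F1)
      finally show ?thesis by simp
    qed
    then show "n_normal n T" using NRiff by blast
  next
    assume "n_normal n T"
    then have NR: "\<And>x. (a ^^ n) (s x) = s ((a ^^ n) x)" using NRiff by blast
    have "(a ^^ n) (m x) = m ((a ^^ n) x)" for x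
    proof -
      have "(a ^^ n) (m x) = (a ^^ n) (s (t (m x)))" using F4 by metis
      also have "\<dots> = s ((a ^^ n) (t (m x)))" by (rule NR)
      also have "\<dots> = s (t ((a ^^ n) (m x)))" by (simp add: ta_pow)
      also have "\<dots> = m (a ((a ^^ n) (m x)))" by (rule Q1)
      also have "\<dots> = m ((a ^^ n) (a (m x)))" by (simp add: aa_pow)
      finally have 1: "(a ^^ n) (m x) = m ((a ^^ n) (a (m x)))" .
      have "m ((a ^^ n) x) = m (t (s ((a ^^ n) x)))" by (rule F3)
      also have "\<dots> = m (t ((a ^^ n) (s x)))" by (simp add: NR)
      also have "\<dots> = m ((a ^^ n) (t (s x)))" by (simp add: ta_pow)
      also have "\<dots> = m ((a ^^ n) (a (m x)))" by (simp add: Q2)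
      finally show ?thesis using 1 by simp
    qed
    then show "n_EP n T" using EPiff by blast
  qed
qed


end
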